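(* Let $a,b\in\mathbb{Z}$ with $\gcd(a,b)=1$ and $a^2+ab-b^2\not\equiv0\pmod5$. Let $m\ge1$ with $5\nmid m$, and suppose $\{G_n(a,b)\}$ is complete mod $m$. Then $\{G_n(a,b)\}$ is complete mod $5m$.
   Context: For integers $a,b$ with $\gcd(a,b)=1$, the Gibonacci sequence $\{G_n(a,b)\}_{n\ge1}$ is defined by $G_1=a$, $G_2=b$, $G_{n+1}=G_{n-1}+G_n$. A sequence is complete mod $m$ if every residue class modulo $m$ contains some term of the sequence. *)

theory Defs
  imports Main "HOL-Number_Theory.Cong"
begin

text \<open>Gibonacci sequence: gib a b 1 = a, gib a b 2 = b, gib a b (n+1) = gib a b (n-1) + gib a b n.
  Indexing starts at 1; the value at 0 is irrelevant (set to b - a for convenience).\<close>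
fun gib :: "int \<Rightarrow> int \<Rightarrow> nat \<Rightarrow> int" where
  "gib a b 0 = b - a"
| "gib a b (Suc 0) = a"
| "gib a b (Suc (Suc 0)) = b"
| "gib a b (Suc (Suc (Suc n))) = gib a b (Suc n) + gib a b (Suc (Suc n))"

definition complete_mod :: "(nat \<Rightarrow> int) \<Rightarrow> int \<Rightarrow> bool" where
  "complete_mod G m \<longleftrightarrow> (\<forall>r::int. \<exists>n\<ge>1. [G n = r] (mod m))"

end

theory Submission
  imports Defs "HOL-Number_Theory.Number_Theory"
begin




datatype zp = ZP (re: int) (im: int)

lemma zp_eq_iff: "x = y \<longleftrightarrow> re x = re y \<and> im x = im y"
  by (cases x; cases y) auto

instantiation zp :: comm_ring_1
begin
definition "0 = ZP 0 0"
definition "1 = ZP 1 0"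
definition "x + y = ZP (re x + re y) (im x + im y)"
definition "- x = ZP (- re x) (- im x)"
definition "x - y = ZP (re x - re y) (im x - im y)"
definition "x * y = ZP (re x * re y + im x * im y) (re x * im y + im x * re y + im x * im y)"
instance
  by standard (auto simp: zp_eq_iff zero_zp_def one_zp_def plus_zp_def uminus_zp_def
      minus_zp_def times_zp_def algebra_simps)
end

lemma re_simps[simp]: "re 0 = 0" "im 0 = 0" "re 1 = 1" "im 1 = 0"
  "re (x + y) = re x + re y" "im (x + y) = im x + im y"
  "re (x - y) = re x - re y" "im (x - y) = im x - im y"
  "re (- x) = - re x" "im (- x) = - im x"
  "re (x * y) = re x * re y + im x * im y"
  "im (x * y) = re x * im y + im x * re y + im x * im y"
  by (simp_all add: zero_zp_def one_zp_def plus_zp_def uminus_zp_def minus_zp_def times_zp_def)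

lemma re_of_nat[simp]: "re (of_nat n) = int n" "im (of_nat n) = 0"
  by (induction n) simp_all

lemma re_numeral[simp]: "re (numeral n) = numeral n" "im (numeral n) = 0"
  using re_of_nat[of "numeral n"] by simp_all

lemma re_of_int[simp]: "re (of_int k) = k" "im (of_int k) = 0"
  by (cases k rule: int_cases; simp)+

lemma of_int_dvd_zp: "(of_int k dvd (z::zp)) \<longleftrightarrow> k dvd re z \<and> k dvd im z"
proof
  assume "of_int k dvd z"
  then obtain w where "z = of_int k * w" by (auto elim: dvdE)
  then show "k dvd re z \<and> k dvd im z" by simp
next
  assume h: "k dvd re z \<and> k dvd im z"
  then obtain u v where uv: "re z = k * u" "im z = k * v" by (auto elim!: dvdE)
  have "z = of_int k * ZP u v" using uv by (simp add: zp_eq_iff)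
  then show "of_int k dvd z" by (rule dvdI)
qed

definition phi :: zp where "phi = ZP 0 1"

lemma gib_rec: "gib a b (n + 2) = gib a b n + gib a b (n + 1)"
proof (cases n)
  case (Suc k) then show ?thesis by (cases k) simp_all
qed simp

lemma re_phi[simp]: "re phi = 0" "im phi = 1" by (simp_all add: phi_def)

lemma phi_pow_Suc: "re (phi ^ Suc k) = im (phi ^ k)" "im (phi ^ Suc k) = re (phi ^ k) + im (phi ^ k)"
  by (simp_all add: mult.commute[of phi])

lemma gib_shift: "gib a b (n + k) = re (phi ^ k) * gib a b n + im (phi ^ k) * gib a b (n + 1)"
proof (induction k arbitrary: n)
  case 0 then show ?case by simp
next
  case (Suc k)
  have "gib a b (n + Suc k) = gib a b ((n + 1) + k)" by simp
  also have "\<dots> = re (phi ^ k) * gib a b (n+1) + im (phi ^ k) * gib a b (n + 2)"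
    using Suc[of "n+1"] by (simp add: add.assoc)
  also have "\<dots> = re (phi ^ Suc k) * gib a b n + im (phi ^ Suc k) * gib a b (n + 1)"
    using gib_rec[of a b n] by (simp add: phi_pow_Suc algebra_simps)
  finally show ?case .
qed

lemma gib_period:
  assumes "of_int m dvd (phi ^ T - 1)"
  shows "[gib a b (n + T) = gib a b n] (mod m)"
proof -
  from assms have "m dvd re (phi ^ T) - 1" "m dvd im (phi ^ T)"
    by (simp_all add: of_int_dvd_zp)
  then have "[re (phi ^ T) * gib a b n + im (phi ^ T) * gib a b (n + 1) = 1 * gib a b n + 0 * gib a b (n+1)] (mod m)"
    by (intro cong_add cong_mult cong_refl) (simp_all add: cong_iff_dvd_diff dvd_def)
  then show ?thesis by (simp add: gib_shift)
qed

lemma gib_period_mult: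
  assumes "of_int m dvd (phi ^ T - 1)"
  shows "[gib a b (n + k * T) = gib a b n] (mod m)"
proof (induction k)
  case 0 then show ?case by simp
next
  case (Suc k)
  have "[gib a b ((n + k * T) + T) = gib a b (n + k*T)] (mod m)" by (rule gib_period[OF assms])
  then show ?case using Suc by (simp add: ac_simps) (metis cong_trans)
qed


lemma frob:
  fixes x y :: "'a::comm_ring_1"
  assumes p: "prime p"
  shows "of_nat p dvd ((x + y) ^ p - x ^ p - y ^ p)"
proof -
  define f where "f k = of_nat (p choose k) * x ^ k * y ^ (p - k)" for k
  have p0: "p > 0" using p prime_gt_0_nat by blast
  have S: "{..p} = insert 0 (insert p {0<..<p})" using p0 by auto
  have "(x + y) ^ p = (\<Sum>k\<le>p. f k)" unfolding f_def by (rule binomial_ring)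
  also have "\<dots> = f 0 + (f p + (\<Sum>k\<in>{0<..<p}. f k))"
    unfolding S using p0 by (simp add: sum.insert)
  also have "f 0 = y ^ p" by (simp add: f_def)
  also have "f p = x ^ p" by (simp add: f_def)
  finally have eq: "(x + y) ^ p - x ^ p - y ^ p = (\<Sum>k\<in>{0<..<p}. f k)" by (simp add: algebra_simps)
  have "of_nat p dvd f k" if "k \<in> {0<..<p}" for k
  proof -
    have "p dvd (p choose k)" using that p by (intro dvd_choose_prime) auto
    then obtain c where "p choose k = p * c" by (auto elim: dvdE)
    then show ?thesis by (simp add: f_def mult.assoc)
  qed
  then have "of_nat p dvd (\<Sum>k\<in>{0<..<p}. f k)" by (rule dvd_sum)
  then show ?thesis using eq by simp
qed

lemma lift:
  fixes x :: "'a::comm_ring_1"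
  assumes "p dvd d" "of_nat d dvd (x - 1)"
  shows "of_nat (d * p) dvd (x ^ p - 1)"
proof -
  obtain c where "d = p * c" using assms(1) by (auto elim: dvdE)
  then have "of_nat p dvd (of_nat d :: 'a)" by simp
  then have pd: "of_nat p dvd (x - 1)" using assms(2) dvd_trans by blast
  have "of_nat p dvd (x ^ i - 1)" for i
  proof -
    have "x - 1 dvd x ^ i - 1" by (simp add: power_diff_1_eq)
    then show ?thesis using pd dvd_trans by blast
  qed
  then have "of_nat p dvd (\<Sum>i<p. (x ^ i - 1))" by (simp add: dvd_sum)
  moreover have "(\<Sum>i<p. (x ^ i - 1)) = (\<Sum>i<p. x ^ i) - of_nat p"
    by (simp add: sum_subtractf)
  ultimately have sp: "of_nat p dvd (\<Sum>i<p. x ^ i)"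
    by (metis diff_add_cancel dvd_add dvd_refl)
  have "of_nat d * of_nat p dvd (x - 1) * (\<Sum>i<p. x ^ i)"
    using mult_dvd_mono[OF assms(2) sp] .
  then show ?thesis by (simp add: power_diff_1_eq)
qed

lemma pow_dvd_pow_mult:
  fixes x :: "'a::comm_ring_1"
  shows "x ^ T1 - 1 dvd x ^ (T1 * T2) - 1"
  by (simp add: power_mult power_diff_1_eq)

lemma comb:
  assumes "coprime d1 d2" "of_int d1 dvd (z::zp)" "of_int d2 dvd z"
  shows "of_int (d1 * d2) dvd z"
  using assms unfolding of_int_dvd_zp by (simp add: divides_mult)

definition NN :: zp where "NN = ZP (-1) 2"

lemma NN_sq: "NN ^ 2 = of_int 5" by (simp add: zp_eq_iff NN_def power2_eq_square)

lemma NN_pow_odd: "NN ^ (2*h+1) = of_int (5^h) * NN"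
  by (simp add: power_add power_mult NN_sq)

lemma phi_inv: "phi * (phi - 1) = 1" by (simp add: zp_eq_iff)

lemma cancel2:
  assumes "prime p" "p \<noteq> 2" "of_int (int p) dvd (2 * z)"
  shows "of_int (int p) dvd (z::zp)"
proof -
  have cop: "coprime (int p) 2"
    using assms by (metis coprime_commute odd_numeral prime_nat_iff_prime primes_coprime prime_imp_coprime
        coprime_int_iff  of_nat_numeral two_is_prime_nat)
  show ?thesis using assms(3) cop unfolding of_int_dvd_zp
    by (simp add: coprime_dvd_mult_right_iff)
qed


lemma legendre_5_neg:
  assumes p: "prime p" "p > 2" "p \<noteq> 5" and L: "Legendre 5 (int p) = -1"
  shows "\<not> 5 dvd (2 * p + 2)"
proof
  assume d: "5 dvd (2 * p + 2)"
  have "Legendre (int p) (int 5) * Legendre (int 5) (int p) = (-1::int) ^ ((p - 1) div 2 * ((5 - 1) div 2))"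
    using p by (intro Quadratic_Reciprocity) auto
  then have "Legendre (int p) 5 = -1" using L by simp
  moreover have "p mod 5 = 4" using d by presburger
  then have "[2^2 = int p] (mod 5)"
    by (simp add: cong_def) (metis of_nat_mod of_nat_numeral zmod_int)
  then have "QuadRes 5 (int p)" unfolding QuadRes_def by blast
  ultimately show False by (simp add: Legendre_def split: if_splits)
qed



lemma of_nat_dvd_zp: "(of_nat k dvd (z::zp)) \<longleftrightarrow> int k dvd re z \<and> int k dvd im z"
  using of_int_dvd_zp[of "int k" z] by simp

lemma cancel2':
  assumes "prime p" "p \<noteq> 2" "of_nat p dvd (2 * z)"
  shows "of_nat p dvd (z::zp)"
  using cancel2[of p z] assms by simp

lemma re_num_pow[simp]: "re ((numeral k :: zp) ^ n) = numeral k ^ n" "im ((numeral k :: zp) ^ n) = 0"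
  by (metis of_int_numeral of_int_power re_of_int)+

lemma NN_alt: "NN = 2 * phi - 1" by (simp add: NN_def phi_def zp_eq_iff)

lemma prime_period:
  assumes p: "prime p" "p \<noteq> 5"
  shows "of_nat p dvd (phi ^ (p - 1) - 1) \<or>
         (of_nat p dvd (phi ^ (2*p+2) - 1) \<and> \<not> 5 dvd (2*p+2))"
proof (cases "p = 2")
  case True
  have e: "phi ^ (2*p+2) - 1 = ZP 4 8" using True by (simp add: eval_nat_numeral zp_eq_iff)
  have "of_nat p dvd (phi ^ (2*p+2) - 1)" unfolding e of_nat_dvd_zp using True by simp
  moreover have "\<not> 5 dvd (2*p+2)" using True by simp
  ultimately show ?thesis by blast
next
  case False
  have p2: "p > 2" using prime_ge_2_nat[OF p(1)] False by linarith
  have op: "odd p" using p(1) p2 prime_odd_nat by blast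
  define h where "h = (p - 1) div 2"
  have ph: "p = 2 * h + 1" using op h_def by (auto elim!: oddE)
  define L where "L = Legendre 5 (int p)"
  have n5: "\<not> [5 = 0] (mod int p)"
  proof
    assume "[5 = 0] (mod int p)"
    then have "int p dvd 5" by (simp add: cong_0_iff)
    then have d5: "p dvd 5" by (metis int_dvd_int_iff of_nat_numeral)
    then have "p \<le> 5" by (simp add: dvd_imp_le)
    then have "p = 3 \<or> p = 4" using p2 p(2) by auto
    then show False using d5 by auto
  qed
  have Lpm: "L = 1 \<or> L = -1" using n5 by (simp add: L_def Legendre_def)
  have eu: "[L = 5 ^ h] (mod int p)" unfolding L_def h_def using p p2 by (intro euler_criterion) auto
  have d1: "of_nat p dvd ((1 + NN) ^ p - 1 ^ p - NN ^ p)"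
    using frob[OF p(1), of 1 NN] by simp
  have d2: "of_nat p dvd ((of_int (5 ^ h) - of_int L) * NN)"
    using eu unfolding of_nat_dvd_zp by (simp add: cong_iff_dvd_diff dvd_diff_commute)
  have NNp: "NN ^ p = of_int (5 ^ h) * NN" using NN_pow_odd[of h] ph by simp
  have e3: "(1 + NN) ^ p - 1 ^ p - NN ^ p + (of_int (5 ^ h) - of_int L) * NN = (1 + NN) ^ p - 1 - of_int L * NN"
    unfolding NNp by (simp add: algebra_simps)
  have d3: "of_nat p dvd ((1 + NN) ^ p - 1 - of_int L * NN)"
    using dvd_add[OF d1 d2] unfolding e3 .
  have f2: "[2 ^ p = 2] (mod int p)"
  proof -
    have "\<not> p dvd 2" using p2 by (auto dest: dvd_imp_le)
    then have "[2 ^ (p - 1) = 1] (mod p)" using p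
      by (intro fermat_theorem) auto
    then have "[2 ^ (p - 1) * 2 = 1 * 2] (mod p)" by (intro cong_mult cong_refl)
    moreover have "(2::nat) ^ p = 2 ^ (p - 1) * 2" using ph by simp
    ultimately have "[2 ^ p = 2] (mod p)" by simp
    then show ?thesis using cong_int_iff[of "2^p" 2 p] by simp
  qed
  have d4: "of_nat p dvd ((of_int (2 ^ p - 2)) * phi ^ p)"
    using f2 unfolding of_nat_dvd_zp by (simp add: cong_iff_dvd_diff)
  have NN1: "1 + NN = 2 * phi" by (simp add: NN_alt)
  have e5: "(1 + NN) ^ p - 1 - of_int L * NN - (of_int (2 ^ p - 2)) * phi ^ p = 2 * phi ^ p - 1 - of_int L * NN"
    unfolding NN1 by (simp add: power_mult_distrib algebra_simps)
  have d5: "of_nat p dvd (2 * phi ^ p - 1 - of_int L * NN)"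
    using dvd_diff[OF d3 d4] unfolding e5 .
  show ?thesis using Lpm
  proof
    assume L1: "L = 1"
    have eL: "2 * phi ^ p - 1 - of_int L * NN = 2 * (phi ^ p - phi)"
      using L1 by (simp add: NN_alt algebra_simps)
    have "of_nat p dvd (2 * (phi ^ p - phi))" using d5 unfolding eL .
    then have "of_nat p dvd (phi ^ p - phi)" by (rule cancel2'[OF p(1) False])
    then have "of_nat p dvd ((phi ^ p - phi) * (phi - 1))" by (rule dvd_mult2)
    moreover have "(phi ^ p - phi) * (phi - 1) = phi ^ (p - 1) - 1"
    proof -
      have "p = Suc (p - 1)" using p2 by simp
      then have pp: "phi ^ p = phi ^ (p - 1) * phi" by (metis power_Suc2)
      have "(phi ^ p - phi) * (phi - 1) = phi ^ (p - 1) * (phi * (phi - 1)) - phi * (phi - 1)"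
        unfolding pp by (simp add: algebra_simps)
      also have "\<dots> = phi ^ (p - 1) - 1" by (simp only: phi_inv mult_1_right)
      finally show ?thesis .
    qed
    ultimately have "of_nat p dvd (phi ^ (p - 1) - 1)" by (simp only:)
    then show ?thesis ..
  next
    assume L1: "L = -1"
    have eL: "2 * phi ^ p - 1 - of_int L * NN = 2 * (phi ^ p - 1 + phi)"
      using L1 by (simp add: NN_alt algebra_simps)
    have "of_nat p dvd (2 * (phi ^ p - 1 + phi))" using d5 unfolding eL .
    then have "of_nat p dvd (phi ^ p - 1 + phi)" by (rule cancel2'[OF p(1) False])
    then have dv: "of_nat p dvd ((phi ^ (p+1) - 1) * (phi * (phi ^ p - 1 + phi)))" by (intro dvd_mult)
    have eq: "(phi ^ (p+1) - 1) * (phi * (phi ^ p - 1 + phi)) = phi ^ (2*p+2) - 1"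
    proof -
      have "phi * (phi ^ p - 1 + phi) = phi ^ (p+1) + phi * (phi - 1)"
        by (simp add: algebra_simps)
      then have e: "phi * (phi ^ p - 1 + phi) = phi ^ (p+1) + 1" by (simp only: phi_inv)
      have e2: "phi ^ (2*p+2) = phi ^ (p+1) * phi ^ (p+1)"
        by (simp only: power_add[symmetric]) (simp add: mult_2)
      show ?thesis unfolding e e2 by (simp add: ring_distribs)
    qed
    have n5': "\<not> 5 dvd (2*p+2)" by (rule legendre_5_neg[OF p(1) p2 p(2) L1[unfolded L_def]])
    have "of_nat p dvd (phi ^ (2*p+2) - 1)" using dv unfolding eq .
    then show ?thesis using n5' by blast
  qed
qed



lemma complete_dvd:
  assumes "complete_mod G m" "d dvd m"
  shows "complete_mod G d"
  using assms unfolding complete_mod_def by (meson cong_dvd_modulus)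

lemma incomplete:
  assumes p: "prime p" and h: "of_nat p dvd (phi ^ (p - 1) - 1)"
  shows "\<not> complete_mod (gib a b) (int p)"
proof
  assume c: "complete_mod (gib a b) (int p)"
  define T where "T = p - 1"
  have p2: "p \<ge> 2" using prime_ge_2_nat p by blast
  then have T1: "T \<ge> 1" unfolding T_def by simp
  have hT: "of_int (int p) dvd (phi ^ T - 1)" using h unfolding T_def by simp
  have red: "\<exists>n'\<in>{1..T}. [gib a b n' = r] (mod int p)" for r
  proof -
    obtain n where n: "n \<ge> 1" "[gib a b n = r] (mod int p)" using c unfolding complete_mod_def by blast
    define n' where "n' = (n - 1) mod T + 1"
    have nn: "n = n' + ((n - 1) div T) * T" unfolding n'_def using n(1)
      by (metis add.commute add_diff_inverse_nat div_mult_mod_eq less_one not_le add.assoc)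
    have "[gib a b (n' + ((n - 1) div T) * T) = gib a b n'] (mod int p)"
      by (rule gib_period_mult[OF hT])
    then have "[gib a b n' = r] (mod int p)" using n(2) nn by (metis cong_sym cong_trans)
    moreover have "n' \<in> {1..T}" unfolding n'_def using T1
      by (simp add: Suc_le_eq)
    ultimately show ?thesis by blast
  qed
  define f where "f r = (SOME n'. n' \<in> {1..T} \<and> [gib a b n' = r] (mod int p))" for r
  have f: "f r \<in> {1..T} \<and> [gib a b (f r) = r] (mod int p)" for r
    unfolding f_def using someI_ex[OF red[of r, unfolded Bex_def]] by blast
  have "inj_on f {0..<int p}"
  proof (rule inj_onI)
    fix x y assume xy: "x \<in> {0..<int p}" "y \<in> {0..<int p}" "f x = f y"
    then have "[x = y] (mod int p)" using f[of x] f[of y] by (metis cong_sym cong_trans)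
    then show "x = y" using xy by (simp add: cong_def)
  qed
  moreover have "f ` {0..<int p} \<subseteq> {1..T}" using f by blast
  ultimately have "card {0..<int p} \<le> card {1..T}" by (intro card_inj_on_le) auto
  then show False unfolding T_def using p2 by simp
qed

lemma five_not_dvd_mult:
  fixes x y :: nat
  shows "\<not> 5 dvd x \<Longrightarrow> \<not> 5 dvd y \<Longrightarrow> \<not> 5 dvd (x * y)"
proof -
  have "prime (5::nat)" by simp
  then show "\<not> 5 dvd x \<Longrightarrow> \<not> 5 dvd y \<Longrightarrow> \<not> 5 dvd (x * y)" using prime_dvd_mult_iff by blast
qed


lemma period_exists:
  "n \<ge> 1 \<Longrightarrow> \<not> 5 dvd n \<Longrightarrow> complete_mod (gib a b) (int n) \<Longrightarrow>
     \<exists>T>0. \<not> 5 dvd T \<and> of_nat n dvd (phi ^ T - 1)"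
proof (induction n rule: less_induct)
  case (less n)
  show ?case
  proof (cases "n = 1")
    case True
    then show ?thesis by (intro exI[of _ 1]) simp
  next
    case False
    obtain p where p: "prime p" "p dvd n" using prime_factor_nat[OF False] by blast
    obtain r where r: "n = p * r" using p(2) by (auto elim: dvdE)
    have p2: "p \<ge> 2" using prime_ge_2_nat p(1) by blast
    have r1: "r \<ge> 1" using r less.prems(1) by (cases r) auto
    have rn: "r < n" using r p2 r1 by simp
    have r5: "\<not> 5 dvd r"
    proof
      assume "5 dvd r" then have "5 dvd n" unfolding r by (rule dvd_mult)
      then show False using less.prems(2) by blast
    qed
    have p5: "p \<noteq> 5"
    proof
      assume "p = 5" then show False using less.prems(2) p(2) by blast
    qed
    have cr: "complete_mod (gib a b) (int r)" by (rule complete_dvd[OF less.prems(3)]) (simp add: r)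
    have cp: "complete_mod (gib a b) (int p)" by (rule complete_dvd[OF less.prems(3)]) (simp add: r)
    obtain Tr where Tr: "Tr > 0" "\<not> 5 dvd Tr" "of_nat r dvd (phi ^ Tr - 1)"
      using less.IH[OF rn r1 r5 cr] by blast
    have pp: "of_nat p dvd (phi ^ (2*p+2) - 1)" "\<not> 5 dvd (2*p+2)"
      using prime_period[OF p(1) p5] incomplete[OF p(1), of a b] cp by blast+
    have np5: "\<not> 5 dvd p"
    proof
      assume "5 dvd p" then have "(5::nat) = 1 \<or> 5 = p" using p(1) unfolding prime_nat_iff by blast
      then show False using p5 by simp
    qed
    show ?thesis
    proof (cases "p dvd r")
      case True
      have "of_nat (r * p) dvd ((phi ^ Tr) ^ p - 1)" by (rule lift[OF True Tr(3)])
      then have "of_nat n dvd (phi ^ (Tr * p) - 1)" using r by (simp add: power_mult mult.commute)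
      moreover have "\<not> 5 dvd (Tr * p)" using five_not_dvd_mult Tr(2) np5 by blast
      ultimately show ?thesis using Tr(1) p2 by (intro exI[of _ "Tr * p"]) simp
    next
      case False
      have cop: "coprime (int p) (int r)" using prime_imp_coprime[OF p(1) False] by simp
      have "of_nat r dvd (phi ^ (Tr * (2*p+2)) - 1)"
        using Tr(3) pow_dvd_pow_mult dvd_trans by blast
      then have h1: "of_int (int r) dvd (phi ^ (Tr * (2*p+2)) - 1)" by simp
      have "of_nat p dvd (phi ^ ((2*p+2) * Tr) - 1)"
        using pp(1) pow_dvd_pow_mult dvd_trans by blast
      then have h2: "of_int (int p) dvd (phi ^ (Tr * (2*p+2)) - 1)" by (simp add: mult.commute)
      have "of_int (int p * int r) dvd (phi ^ (Tr * (2*p+2)) - 1)" by (rule comb[OF cop h2 h1])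
      then have "of_nat n dvd (phi ^ (Tr * (2*p+2)) - 1)" using r by simp
      moreover have "\<not> 5 dvd (Tr * (2*p+2))" using five_not_dvd_mult Tr(2) pp(2) by blast
      ultimately show ?thesis using Tr(1) by (intro exI[of _ "Tr * (2*p+2)"]) simp
    qed
  qed
qed


definition QQ :: "int \<Rightarrow> int \<Rightarrow> nat \<Rightarrow> int" where
  "QQ a b n = gib a b n ^ 2 + gib a b n * gib a b (n+1) - gib a b (n+1) ^ 2"

lemma QQ_Suc: "QQ a b (Suc n) = - QQ a b n"
proof -
  have "gib a b (n + 2) = gib a b n + gib a b (n+1)" by (rule gib_rec)
  then show ?thesis unfolding QQ_def by (simp add: power2_eq_square algebra_simps)
qed

lemma QQ_not5:
  assumes "\<not> [a^2 + a*b - b^2 = 0] (mod 5)"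
  shows "\<not> 5 dvd QQ a b n"
proof (induction n)
  case 0
  have "QQ a b 0 = - (a^2 + a*b - b^2)" unfolding QQ_def by (simp add: power2_eq_square algebra_simps)
  then have "5 dvd QQ a b 0 \<longleftrightarrow> 5 dvd (a^2 + a*b - b^2)" by (simp only: dvd_minus_iff)
  then show ?case using assms by (simp add: cong_0_iff)
next
  case (Suc n) then show ?case by (simp add: QQ_Suc)
qed

definition cc :: "int \<Rightarrow> int \<Rightarrow> nat \<Rightarrow> int" where
  "cc a b n = gib a b n + 3 * gib a b (n+1)"

lemma cc_not5:
  assumes "\<not> [a^2 + a*b - b^2 = 0] (mod 5)"
  shows "\<not> 5 dvd cc a b n"
proof
  assume "5 dvd cc a b n"
  then obtain k where k: "gib a b n + 3 * gib a b (n+1) = 5 * k" unfolding cc_def by (auto elim: dvdE)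
  define y where "y = gib a b (n+1)"
  have x: "gib a b n = 5 * k - 3 * y" using k y_def by simp
  have "QQ a b n = 5 * (5 * k^2 - 5 * k * y + y^2)"
    unfolding QQ_def x y_def[symmetric] by (simp add: power2_eq_square algebra_simps)
  then have "5 dvd QQ a b n" by simp
  then show False using QQ_not5[OF assms] by blast
qed

lemma phi4: "phi ^ 4 = ZP 2 3" by (simp add: eval_nat_numeral zp_eq_iff)
lemma phi5: "phi ^ 5 = ZP 3 5" by (simp add: eval_nat_numeral zp_eq_iff)

lemma gib4: "gib a b (n + 4) = gib a b n + cc a b n"
  using gib_shift[of a b n 4] unfolding phi4 cc_def by simp

lemma cc4: "cc a b (n + 4) = cc a b n + 5 * (2 * gib a b n + 3 * gib a b (n+1))"
proof -
  have "gib a b (n + 5) = 3 * gib a b n + 5 * gib a b (n+1)"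
    using gib_shift[of a b n 5] unfolding phi5 by simp
  then show ?thesis using gib_shift[of a b n 4] unfolding phi4 cc_def
    by (simp add: algebra_simps)
qed

lemma cc_step: "[cc a b (n + 4 * j) = cc a b n] (mod 5)"
proof (induction j)
  case 0 then show ?case by simp
next
  case (Suc j)
  have "[cc a b ((n + 4 * j) + 4) = cc a b (n + 4 * j)] (mod 5)"
    unfolding cc4 cong_iff_dvd_diff by simp
  then show ?case using Suc by (simp add: algebra_simps) (metis cong_trans)
qed

lemma gib_step: "[gib a b (n + 4 * j) = gib a b n + int j * cc a b n] (mod 5)"
proof (induction j)
  case 0 then show ?case by simp
next
  case (Suc j)
  have e: "gib a b (n + 4 * Suc j) = gib a b (n + 4 * j) + cc a b (n + 4 * j)"
    using gib4[of a b "n + 4 * j"] by (simp add: algebra_simps)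
  have "[gib a b (n + 4 * j) + cc a b (n + 4 * j) = (gib a b n + int j * cc a b n) + cc a b n] (mod 5)"
    by (intro cong_add Suc cc_step)
  then show ?case unfolding e by (simp add: algebra_simps)
qed

lemma pow4_mod5:
  fixes u :: int
  assumes "\<not> 5 dvd u"
  shows "[u ^ 4 = 1] (mod 5)"
proof -
  have "[u ^ 4 = (u mod 5) ^ 4] (mod 5)" by (simp add: cong_def power_mod)
  moreover have "u mod 5 = 1 \<or> u mod 5 = 2 \<or> u mod 5 = 3 \<or> u mod 5 = 4" using assms by presburger
  then have "[(u mod 5) ^ 4 = 1] (mod 5)" by (auto simp: cong_def)
  ultimately show ?thesis by (metis cong_trans)
qed


theorem mainTheorem17:
  fixes a b m :: int
  assumes "gcd a b = 1"
    and "\<not> [a^2 + a*b - b^2 = 0] (mod 5)"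
    and "m \<ge> 1"
    and "\<not> (5 dvd m)"
    and "complete_mod (gib a b) m"
  shows "complete_mod (gib a b) (5 * m)"
proof -
  have m: "m = int (nat m)" using assms(3) by simp
  have n5: "\<not> 5 dvd nat m"
  proof
    assume "5 dvd nat m"
    then have "int 5 dvd int (nat m)" by (simp only: int_dvd_int_iff)
    then show False using assms(4) m by simp
  qed
  have p5: "prime (5::int)" by simp
  obtain T where T: "T > 0" "\<not> 5 dvd T" "of_nat (nat m) dvd (phi ^ T - 1)"
    using period_exists[of "nat m" a b] assms(3,5) n5 m by auto
  have "of_nat (nat m) dvd (phi ^ (T * 4) - 1)"
    using T(3) pow_dvd_pow_mult dvd_trans by blast
  then have hT: "of_int m dvd (phi ^ (T * 4) - 1)" using m by (metis of_int_of_nat_eq)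
  have cop: "coprime 5 m" using prime_imp_coprime[OF p5 assms(4)] .
  show ?thesis unfolding complete_mod_def
  proof
    fix r :: int
    obtain n0 where n0: "n0 \<ge> 1" "[gib a b n0 = r] (mod m)"
      using assms(5) unfolding complete_mod_def by blast
    define g where "g = gib a b n0"
    define u where "u = int T * cc a b n0"
    have u5: "\<not> 5 dvd u"
    proof
      assume "5 dvd u"
      then have "5 dvd int T \<or> 5 dvd cc a b n0" unfolding u_def using prime_dvd_mult_iff[OF p5] by blast
      moreover have "\<not> 5 dvd int T"
      proof
        assume "5 dvd int T"
        then have "int 5 dvd int T" by simp
        then show False using T(2) by (simp only: int_dvd_int_iff)
      qed
      ultimately show False using cc_not5[OF assms(2)] by blast
    qed
    define i where "i = nat (((r - g) * u ^ 3) mod 5)"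
    have ii: "int i = ((r - g) * u ^ 3) mod 5" unfolding i_def by simp
    define N where "N = n0 + i * (T * 4)"
    have N1: "N \<ge> 1" using n0(1) unfolding N_def by simp
    have cm: "[gib a b N = r] (mod m)"
      unfolding N_def using gib_period_mult[OF hT, of a b n0 i] n0(2) by (metis cong_trans)
    have e1: "n0 + 4 * (T * i) = N" unfolding N_def by (simp add: algebra_simps)
    have e2: "int (T * i) * cc a b n0 = int i * u" unfolding u_def by (simp add: algebra_simps)
    have c1: "[gib a b N = g + int i * u] (mod 5)"
      using gib_step[of a b n0 "T * i"] unfolding e1 e2 g_def .
    have "[int i = (r - g) * u ^ 3] (mod 5)" unfolding ii by (simp add: cong_def)
    then have A: "[int i * u = (r - g) * u ^ 3 * u] (mod 5)" by (intro cong_mult cong_refl)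
    have B: "(r - g) * u ^ 3 * u = (r - g) * u ^ 4" by (simp add: power3_eq_cube power4_eq_xxxx)
    have C: "[(r - g) * u ^ 4 = (r - g) * 1] (mod 5)" by (intro cong_mult cong_refl pow4_mod5 u5)
    have "[int i * u = (r - g) * u ^ 4] (mod 5)" using A unfolding B .
    from cong_trans[OF this C] have "[int i * u = r - g] (mod 5)" by simp
    then have "[g + int i * u = g + (r - g)] (mod 5)" by (intro cong_add cong_refl)
    from cong_trans[OF c1 this] have c5: "[gib a b N = r] (mod 5)" by simp
    have "5 * m dvd gib a b N - r"
      using cm c5 cop by (simp add: cong_iff_dvd_diff divides_mult)
    then have "[gib a b N = r] (mod 5 * m)" by (simp add: cong_iff_dvd_diff)
    then show "\<exists>n\<ge>1. [gib a b n = r] (mod 5 * m)" using N1 by blast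
  qed
qed


end
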